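(* Let $q$ be a prime power and $n,k,\alpha$ positive integers with $k\mid n$, $\alpha\ge3$ and $n\ge\alpha k$. Then $$B_q(n,k,(\alpha-1)k;\alpha)\ge q^{\frac{n-\alpha k+1}{\alpha-1}}.$$
   Context: For a prime power $q$, $\mathcal{G}_q(n,k)$ denotes the set of all $k$-dimensional subspaces of $\mathbb{F}_q^n$. An $\alpha$-$(n,k,\delta)_q^c$ covering Grassmannian code is a subset $\mathcal{C}\subseteq\mathcal{G}_q(n,k)$ (no repeated codewords) such that every set of $\alpha$ distinct codewords of $\mathcal{C}$ spans a subspace of $\mathbb{F}_q^n$ of dimension at least $k+\delta$. $B_q(n,k,\delta;\alpha)$ denotes the maximum size of an $\alpha$-$(n,k,\delta)_q^c$ code. *)

theory Defs
  imports "HOL-Analysis.Analysis"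
begin

text \<open>The ambient space F_q^n is modelled as the vector type 'a^'n over a finite
field 'a (with q = CARD('a)) and n = CARD('n).\<close>

definition grassmannian :: "nat \<Rightarrow> ('a::field ^ 'n) set set" where
  "grassmannian k = {U. vec.subspace U \<and> vec.dim U = k}"

definition covering_grassmannian_code ::
  "nat \<Rightarrow> nat \<Rightarrow> nat \<Rightarrow> ('a::field ^ 'n) set set \<Rightarrow> bool" where
  "covering_grassmannian_code k \<delta> \<alpha> C \<longleftrightarrow>
     C \<subseteq> grassmannian k \<and>
     (\<forall>S \<subseteq> C. card S = \<alpha> \<longrightarrow> vec.dim (vec.span (\<Union>S)) \<ge> k + \<delta>)"

definition B_cov :: "'a::{field,finite} itself \<Rightarrow> 'n::finite itself \<Rightarrow> nat \<Rightarrow> nat \<Rightarrow> nat \<Rightarrow> nat" where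
  "B_cov _ _ k \<delta> \<alpha> =
     Max {card C | C :: ('a ^ 'n) set set. covering_grassmannian_code k \<delta> \<alpha> C}"

end

theory Submission
  imports Defs
begin

lemma card_span_le:
  fixes W :: "('a::{field,finite} ^ 'n) set"
  shows "card (vec.span W) \<le> CARD('a) ^ vec.dim W"
proof -
  obtain B where B: "B \<subseteq> W" "vec.independent B" "W \<subseteq> vec.span B" "card B = vec.dim W"
    using vec.basis_exists[of W] by blast
  have fB: "finite B" by simp
  have "vec.span W = vec.span B"
    using B by (meson order_antisym vec.span_minimal vec.span_mono vec.subspace_span)
  also have "\<dots> = range (\<lambda>u. \<Sum>v\<in>B. u v *s v)" by (rule vec.span_finite[OF fB])
  also have "\<dots> = (\<lambda>u. \<Sum>v\<in>B. u v *s v) ` (B \<rightarrow>\<^sub>E UNIV)"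
  proof
    show "range (\<lambda>u. \<Sum>v\<in>B. u v *s v) \<subseteq> (\<lambda>u. \<Sum>v\<in>B. u v *s v) ` (B \<rightarrow>\<^sub>E UNIV)"
    proof
      fix y assume "y \<in> range (\<lambda>u. \<Sum>v\<in>B. u v *s v)"
      then obtain u where y: "y = (\<Sum>v\<in>B. u v *s v)" by blast
      have "y = (\<Sum>v\<in>B. restrict u B v *s v)" unfolding y by (rule sum.cong) auto
      moreover have "restrict u B \<in> B \<rightarrow>\<^sub>E UNIV" by simp
      ultimately show "y \<in> (\<lambda>u. \<Sum>v\<in>B. u v *s v) ` (B \<rightarrow>\<^sub>E UNIV)" by blast
    qed
  qed auto
  finally have "card (vec.span W) \<le> card (B \<rightarrow>\<^sub>E (UNIV::'a set))"
    by (simp add: card_image_le)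
  also have "\<dots> = CARD('a) ^ card B" by (simp add: card_PiE fB)
  finally show ?thesis using B by simp
qed

fun bad :: "('a::field ^ 'n) set \<Rightarrow> ('a ^ 'n) list \<Rightarrow> bool" where
  "bad W [] = False"
| "bad W (x # xs) = (x \<in> vec.span W \<or> bad (insert x W) xs)"

lemma card_lists_UNIV:
  "card {xs :: ('a::finite) list. length xs = k} = CARD('a) ^ k"
  using card_lists_length_eq[of "UNIV::'a set" k] by simp

lemma finite_lists_UNIV[simp]:
  "finite {xs :: ('a::finite) list. length xs = k}"
  using finite_lists_length_eq[of "UNIV::'a set" k] by simp

lemma bad_count:
  fixes W :: "('a::{field,finite} ^ 'n) set"
  assumes "vec.dim W \<le> d"
  shows "card {xs. length xs = k \<and> bad W xs} * CARD('a^'n)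
           \<le> CARD('a^'n) ^ k * (\<Sum>i<k. CARD('a) ^ (d + i))"
  using assms
proof (induction k arbitrary: W d)
  case 0
  then show ?case by simp
next
  case (Suc k)
  let ?Q = "CARD('a^'n)" and ?q = "CARD('a)"
  define A1 where "A1 = (\<lambda>(x,xs). x # xs) ` (vec.span W \<times> {xs::('a^'n) list. length xs = k})"
  define S where "S = (\<lambda>x. {xs. length xs = k \<and> bad (insert x W) xs})"
  define A2 where "A2 = (\<Union>x. (Cons x) ` S x)"
  have sub: "{xs. length xs = Suc k \<and> bad W xs} \<subseteq> A1 \<union> A2"
  proof
    fix ys assume "ys \<in> {xs. length xs = Suc k \<and> bad W xs}"
    then obtain x xs where ys: "ys = x # xs" "length xs = k" "bad W (x # xs)"
      by (cases ys) auto
    show "ys \<in> A1 \<union> A2"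
    proof (cases "x \<in> vec.span W")
      case True then have "ys \<in> A1" unfolding A1_def using ys by force
      then show ?thesis by blast
    next
      case False then have "bad (insert x W) xs" using ys by simp
      then have "ys \<in> A2" unfolding A2_def S_def using ys by blast
      then show ?thesis by blast
    qed
  qed
  have "card A1 \<le> card (vec.span W \<times> {xs::('a^'n) list. length xs = k})"
    unfolding A1_def by (rule card_image_le) simp
  also have "\<dots> = card (vec.span W) * ?Q ^ k" by (simp add: card_cartesian_product card_lists_UNIV)
  also have "\<dots> \<le> ?q ^ d * ?Q ^ k"
  proof -
    have "card (vec.span W) \<le> ?q ^ vec.dim W" by (rule card_span_le)
    also have "\<dots> \<le> ?q ^ d" using Suc.prems by (intro power_increasing) auto
    finally show ?thesis by simp
  qed
  finally have c1: "card A1 \<le> ?q ^ d * ?Q ^ k" .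
  have IH: "card (S x) * ?Q \<le> ?Q ^ k * (\<Sum>i<k. ?q ^ (Suc d + i))" for x
  proof -
    have "vec.dim (insert x W) \<le> Suc d" using Suc.prems by (simp add: vec.dim_insert)
    then show ?thesis unfolding S_def by (rule Suc.IH)
  qed
  have finS: "finite (S x)" for x
    unfolding S_def by (rule finite_subset[OF _ finite_lists_UNIV[of k]]) auto
  have "card A2 \<le> (\<Sum>x\<in>UNIV. card ((Cons x) ` S x))"
    unfolding A2_def by (rule card_UN_le) (auto simp: finS)
  also have "\<dots> \<le> (\<Sum>x\<in>UNIV. card (S x))"
    by (intro sum_mono card_image_le finS)
  finally have "card A2 * ?Q \<le> (\<Sum>x\<in>UNIV. card (S x) * ?Q)"
    by (metis mult_le_mono1 sum_distrib_right)
  also have "\<dots> \<le> (\<Sum>x\<in>(UNIV::('a^'n) set). ?Q ^ k * (\<Sum>i<k. ?q ^ (Suc d + i)))"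
    by (intro sum_mono IH)
  also have "\<dots> = ?Q * (?Q ^ k * (\<Sum>i<k. ?q ^ (Suc d + i)))" by simp
  finally have c2: "card A2 * ?Q \<le> ?Q * (?Q ^ k * (\<Sum>i<k. ?q ^ (Suc d + i)))" .
  have "card {xs. length xs = Suc k \<and> bad W xs} \<le> card (A1 \<union> A2)"
    by (rule card_mono[OF _ sub]) (simp add: A1_def A2_def finS)
  also have "\<dots> \<le> card A1 + card A2" by (rule card_Un_le)
  finally have "card {xs. length xs = Suc k \<and> bad W xs} * ?Q \<le> card A1 * ?Q + card A2 * ?Q"
    by (metis add_mult_distrib mult_le_mono1)
  also have "\<dots> \<le> ?q ^ d * ?Q ^ k * ?Q + ?Q * (?Q ^ k * (\<Sum>i<k. ?q ^ (Suc d + i)))"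
    using c1 c2 by (intro add_mono mult_le_mono1) auto
  also have "\<dots> = ?Q ^ Suc k * (?q ^ d + (\<Sum>i<k. ?q ^ (Suc d + i)))"
    by (simp only: power_Suc algebra_simps)
  also have "?q ^ d + (\<Sum>i<k. ?q ^ (Suc d + i)) = (\<Sum>i<Suc k. ?q ^ (d + i))"
    by (subst sum.lessThan_Suc_shift) simp
  finally show ?case .
qed

lemma span_sub_span:
  fixes A B :: "('a::field ^ 'n) set"
  assumes "A \<subseteq> vec.span B" shows "vec.span A \<subseteq> vec.span B"
  using assms by (meson vec.span_minimal vec.subspace_span)

lemma bad_mono:
  fixes W W' :: "('a::field ^ 'n) set"
  assumes "vec.span W \<subseteq> vec.span W'" "bad W xs"
  shows "bad W' xs"
  using assms
proof (induction xs arbitrary: W W')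
  case Nil then show ?case by simp
next
  case (Cons x xs)
  show ?case
  proof (cases "x \<in> vec.span W")
    case True then show ?thesis using Cons.prems by auto
  next
    case False
    then have b: "bad (insert x W) xs" using Cons.prems by simp
    have "insert x W \<subseteq> vec.span (insert x W')"
      using Cons.prems(1) vec.span_superset[of W] vec.span_mono[of W' "insert x W'"]
        vec.span_superset[of "insert x W'"] by blast
    then have "vec.span (insert x W) \<subseteq> vec.span (insert x W')" by (rule span_sub_span)
    from Cons.IH[OF this b] show ?thesis by simp
  qed
qed

lemma not_bad_dim:
  fixes W :: "('a::field ^ 'n) set"
  assumes "\<not> bad W xs"
  shows "vec.dim (W \<union> set xs) = vec.dim W + length xs"
  using assms
proof (induction xs arbitrary: W)
  case Nil then show ?case by simp
next
  case (Cons x xs)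
  then have "x \<notin> vec.span W" "\<not> bad (insert x W) xs" by auto
  with Cons.IH[of "insert x W"] show ?case by (simp add: vec.dim_insert)
qed

lemma dim_Un_span:
  fixes A B :: "('a::field ^ 'n) set"
  shows "vec.dim (A \<union> vec.span B) = vec.dim (A \<union> B)"
proof -
  have "A \<union> vec.span B \<subseteq> vec.span (A \<union> B)"
    using vec.span_superset[of "A \<union> B"] vec.span_mono[of B "A \<union> B"] by blast
  then have "vec.span (A \<union> vec.span B) \<subseteq> vec.span (A \<union> B)" by (rule span_sub_span)
  moreover have "vec.span (A \<union> B) \<subseteq> vec.span (A \<union> vec.span B)"
    using vec.span_superset[of B] by (intro vec.span_mono) blast
  ultimately have "vec.span (A \<union> vec.span B) = vec.span (A \<union> B)" by blast
  then show ?thesis by (metis vec.dim_span)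
qed

lemma dim_Union_le:
  fixes C :: "('a::field ^ 'n) set set"
  assumes "C \<subseteq> grassmannian k" "S \<subseteq> C" "finite S"
  shows "vec.dim (\<Union>S) \<le> k * card S"
proof -
  have "\<forall>U\<in>S. \<exists>B. finite B \<and> vec.span B = U \<and> card B = k"
  proof
    fix U assume "U \<in> S"
    then have "vec.subspace U" "vec.dim U = k" using assms unfolding grassmannian_def by auto
    then show "\<exists>B. finite B \<and> vec.span B = U \<and> card B = k"
      by (metis vec.basis_subspace_exists)
  qed
  then obtain B where B: "\<And>U. U \<in> S \<Longrightarrow> finite (B U) \<and> vec.span (B U) = U \<and> card (B U) = k"
    by metis
  have "\<Union>S \<subseteq> vec.span (\<Union>U\<in>S. B U)"
  proof
    fix x assume "x \<in> \<Union>S"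
    then obtain U where "U \<in> S" "x \<in> U" by blast
    then have "x \<in> vec.span (B U)" using B by auto
    moreover have "vec.span (B U) \<subseteq> vec.span (\<Union>U\<in>S. B U)"
      using \<open>U \<in> S\<close> by (intro vec.span_mono) blast
    ultimately show "x \<in> vec.span (\<Union>U\<in>S. B U)" by blast
  qed
  then have "vec.dim (\<Union>S) \<le> card (\<Union>U\<in>S. B U)"
    by (rule vec.dim_le_card) (use assms B in auto)
  also have "\<dots> \<le> (\<Sum>U\<in>S. card (B U))" by (rule card_UN_le) (use assms B in auto)
  also have "\<dots> = k * card S" using B by simp
  finally show ?thesis .
qed

lemma extend_subset:
  assumes "finite C" "T \<subseteq> C" "card T \<le> m" "m \<le> card C"
  obtains S where "T \<subseteq> S" "S \<subseteq> C" "card S = m"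
proof -
  have "card (C - T) = card C - card T" using assms by (simp add: card_Diff_subset finite_subset)
  then have "m - card T \<le> card (C - T)" using assms by simp
  then obtain R where R: "R \<subseteq> C - T" "card R = m - card T" "finite R"
    by (rule obtain_subset_with_card_n)
  have "card (T \<union> R) = card T + card R"
    using R assms by (intro card_Un_disjoint) (auto intro: finite_subset)
  then have "card (T \<union> R) = m" using R assms by simp
  then show ?thesis using that[of "T \<union> R"] R assms by blast
qed


definition goodc :: "nat \<Rightarrow> nat \<Rightarrow> ('a::field ^ 'n) set set \<Rightarrow> bool" where
  "goodc k \<alpha> C \<longleftrightarrow> finite C \<and> C \<subseteq> grassmannian k \<and>
     (\<forall>S\<subseteq>C. card S \<le> \<alpha> \<longrightarrow> k * card S \<le> vec.dim (\<Union>S))"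

lemma step:
  fixes C :: "('a::{field,finite} ^ 'n) set set"
  assumes good: "goodc k \<alpha> C" and k: "k > 0" and a: "\<alpha> \<ge> 2"
    and hyp: "card {S. S \<subseteq> C \<and> card S = min (card C) (\<alpha> - 1)}
              * (\<Sum>i<k. CARD('a) ^ (k * min (card C) (\<alpha> - 1) + i)) < CARD('a) ^ CARD('n)"
  shows "\<exists>U. U \<notin> C \<and> goodc k \<alpha> (insert U C)"
proof -
  let ?Q = "CARD('a^'n)" and ?q = "CARD('a)"
  define m where "m = min (card C) (\<alpha> - 1)"
  define SS where "SS = {S. S \<subseteq> C \<and> card S = m}"
  define M where "M = ?Q ^ k * (\<Sum>i<k. ?q ^ (k * m + i))"
  have fC: "finite C" and gC: "C \<subseteq> grassmannian k"
    and iC: "\<And>S. S \<subseteq> C \<Longrightarrow> card S \<le> \<alpha> \<Longrightarrow> k * card S \<le> vec.dim (\<Union>S)"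
    using good unfolding goodc_def by auto
  have fSS: "finite SS" unfolding SS_def using fC by (auto intro: finite_subset[of _ "Pow C"])
  define Bad where "Bad = (\<Union>S\<in>SS. {xs. length xs = k \<and> bad (\<Union>S) xs})"
  have each: "card {xs. length xs = k \<and> bad (\<Union>S) xs} * ?Q \<le> M" if "S \<in> SS" for S
  proof -
    have "vec.dim (\<Union>S) \<le> k * card S"
      using that fC gC by (intro dim_Union_le[of C]) (auto simp: SS_def intro: finite_subset)
    then have "vec.dim (\<Union>S) \<le> k * m" using that by (simp add: SS_def)
    then show ?thesis unfolding M_def by (rule bad_count)
  qed
  have "card Bad \<le> (\<Sum>S\<in>SS. card {xs. length xs = k \<and> bad (\<Union>S) xs})"
    unfolding Bad_def by (rule card_UN_le[OF fSS])
  then have "card Bad * ?Q \<le> (\<Sum>S\<in>SS. card {xs. length xs = k \<and> bad (\<Union>S) xs}) * ?Q"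
    by (rule mult_le_mono1)
  also have "\<dots> = (\<Sum>S\<in>SS. card {xs. length xs = k \<and> bad (\<Union>S) xs} * ?Q)"
    by (rule sum_distrib_right)
  also have "\<dots> \<le> (\<Sum>S\<in>SS. M)" by (intro sum_mono each)
  also have "\<dots> = card SS * M" by simp
  also have "\<dots> < ?Q ^ k * ?Q"
  proof -
    have "card SS * (\<Sum>i<k. ?q ^ (k * m + i)) < ?Q"
      using hyp unfolding SS_def m_def by simp
    then have "?Q ^ k * (card SS * (\<Sum>i<k. ?q ^ (k * m + i))) < ?Q ^ k * ?Q"
      by (intro mult_strict_left_mono) auto
    then show ?thesis unfolding M_def by (simp only: ac_simps)
  qed
  finally have "card Bad < ?Q ^ k" by simp
  then have cB: "card Bad < card {xs :: ('a^'n) list. length xs = k}" by (simp only: card_lists_UNIV)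
  have fB: "finite Bad" unfolding Bad_def using fSS
    by (intro finite_UN_I) (auto intro: finite_subset[OF _ finite_lists_UNIV[of k]])
  have "\<not> {xs :: ('a^'n) list. length xs = k} \<subseteq> Bad"
  proof
    assume "{xs :: ('a^'n) list. length xs = k} \<subseteq> Bad"
    from card_mono[OF fB this] cB show False by simp
  qed
  then obtain xs where xs: "length xs = k" "xs \<notin> Bad" by blast
  have nb: "\<not> bad (\<Union>T) xs" if T: "T \<subseteq> C" "card T \<le> m" for T
  proof -
    have "m \<le> card C" unfolding m_def by simp
    then obtain S where S: "T \<subseteq> S" "S \<subseteq> C" "card S = m"
      using extend_subset[OF fC T] by blast
    then have "S \<in> SS" unfolding SS_def by simp
    then have "\<not> bad (\<Union>S) xs" using xs unfolding Bad_def by blast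
    moreover have "vec.span (\<Union>T) \<subseteq> vec.span (\<Union>S)" using S by (intro vec.span_mono) blast
    ultimately show ?thesis using bad_mono by blast
  qed
  define U where "U = vec.span (set xs)"
  have dimT: "vec.dim (\<Union>T \<union> U) = vec.dim (\<Union>T) + k" if "T \<subseteq> C" "card T \<le> m" for T
    using not_bad_dim[OF nb[OF that]] xs unfolding U_def by (simp add: dim_Un_span)
  have dU: "vec.dim U = k" using dimT[of "{}"] by simp
  have UG: "U \<in> grassmannian k" unfolding grassmannian_def U_def using dU U_def by simp
  have UC: "U \<notin> C"
  proof
    assume "U \<in> C"
    then have "card C \<ge> 1" using fC \<open>U \<in> C\<close> by (auto simp: Suc_le_eq card_gt_0_iff)
    then have "card {U} \<le> m" unfolding m_def using a by simp
    from dimT[OF _ this] \<open>U \<in> C\<close> dU k show False by simp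
  qed
  have "goodc k \<alpha> (insert U C)"
    unfolding goodc_def
  proof (intro conjI allI impI)
    show "finite (insert U C)" using fC by simp
    show "insert U C \<subseteq> grassmannian k" using gC UG by simp
    fix S' assume S': "S' \<subseteq> insert U C" "card S' \<le> \<alpha>"
    show "k * card S' \<le> vec.dim (\<Union>S')"
    proof (cases "U \<in> S'")
      case False then show ?thesis using S' iC by blast
    next
      case True
      define T where "T = S' - {U}"
      have TC: "T \<subseteq> C" using S' UC unfolding T_def by blast
      have fT: "finite T" using TC fC by (rule finite_subset)
      have "S' = insert U T" "U \<notin> T" using True unfolding T_def by auto
      then have cS: "card S' = card T + 1" using fT by simp
      have "card T \<le> card C" using fC TC by (rule card_mono)
      moreover have "card T \<le> \<alpha> - 1" using cS S' by simp
      ultimately have cT: "card T \<le> m" unfolding m_def by simp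
      have "\<Union>S' = \<Union>T \<union> U" using True unfolding T_def by blast
      then have "vec.dim (\<Union>S') = vec.dim (\<Union>T) + k" using dimT[OF TC cT] by simp
      moreover have "k * card T \<le> vec.dim (\<Union>T)" using iC[OF TC] cS S' by simp
      ultimately show ?thesis using cS by simp
    qed
  qed
  then show ?thesis using UC by blast
qed



lemma geom_nat:
  fixes q :: nat assumes "q \<ge> 1"
  shows "(\<Sum>i<k. q ^ i) * (q - 1) + 1 = q ^ k"
proof (induction k)
  case 0 then show ?case by simp
next
  case (Suc k)
  have "(\<Sum>i<Suc k. q ^ i) * (q - 1) + 1 = (\<Sum>i<k. q ^ i) * (q - 1) + 1 + q ^ k * (q - 1)"
    by (simp add: algebra_simps)
  also have "\<dots> = q ^ k + q ^ k * (q - 1)" using Suc by simp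
  also have "\<dots> = q ^ Suc k" using assms by (cases q) (auto simp: algebra_simps)
  finally show ?case .
qed

lemma choose_fact_le:
  assumes "r \<le> N" shows "(N choose r) * fact r \<le> N ^ r"
proof -
  have e: "fact N = (N choose r) * fact r * fact (N - r)"
    using binomial_fact_lemma[OF assms] by (simp add: ac_simps)
  have "fact N div fact (N - r) = (N choose r) * fact r"
    unfolding e by simp
  with fact_div_fact_le_pow[OF assms] show ?thesis by simp
qed

lemma arith_hyp:
  fixes q n k \<alpha> :: nat and C :: "'b set"
  assumes q: "q \<ge> 2" and k: "k > 0" and a: "\<alpha> \<ge> 3" and n: "n \<ge> \<alpha> * k"
    and fC: "finite C"
    and N: "card C ^ (\<alpha> - 1) < q ^ (n - \<alpha> * k + 1)"
  shows "card {S. S \<subseteq> C \<and> card S = min (card C) (\<alpha> - 1)}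
           * (\<Sum>i<k. q ^ (k * min (card C) (\<alpha> - 1) + i)) < q ^ n"
proof -
  define G where "G = (\<Sum>i<k. q ^ i)"
  have sh: "(\<Sum>i<k. q ^ (a + i)) = q ^ a * G" for a
    unfolding G_def by (simp add: power_add sum_distrib_left)
  have geo: "G * (q - 1) + 1 = q ^ k" unfolding G_def using q by (intro geom_nat) simp
  show ?thesis
  proof (cases "card C \<ge> \<alpha> - 1")
    case True
    define r where "r = \<alpha> - 1"
    define c where "c = card C choose r"
    define e where "e = n - \<alpha> * k + 1"
    have mn: "min (card C) (\<alpha> - 1) = r" using True r_def by simp
    have cc: "card {S. S \<subseteq> C \<and> card S = r} = c"
      unfolding c_def using n_subsets[OF fC, of r] by simp
    have r2: "r \<ge> 2" using a r_def by simp
    have "c * 2 \<le> c * fact r"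
      using fact_ge_self[of r] r2 by (intro mult_le_mono2) linarith
    also have "\<dots> \<le> card C ^ r" unfolding c_def using True r_def by (intro choose_fact_le) simp
    finally have c2: "2 * c < q ^ e" using N r_def e_def by simp
    have "q ^ 1 \<le> q ^ k" using q k by (intro power_increasing) auto
    then have "q \<le> q ^ k" by simp
    then have Gpos: "G * (q - 1) \<ge> 1" using geo q by linarith
    have ar: "\<alpha> = r + 1" using a r_def by simp
    have kr: "k * r + k = \<alpha> * k" unfolding ar by (simp add: algebra_simps)
    have exps: "e + k * r + k = n + 1" unfolding e_def using n kr by simp
    have "q * (c * (q ^ (k * r) * G)) \<le> (2 * (q - 1)) * (c * (q ^ (k * r) * G))"
      using q by (intro mult_le_mono1) simp
    also have "\<dots> = (2 * c) * q ^ (k * r) * (G * (q - 1))" by (simp add: ac_simps)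
    also have "\<dots> < q ^ e * q ^ (k * r) * (G * (q - 1))"
      using c2 Gpos q by (intro mult_strict_right_mono) auto
    also have "\<dots> < q ^ e * q ^ (k * r) * q ^ k"
      using geo q by (intro mult_strict_left_mono) auto
    also have "\<dots> = q * q ^ n" using exps by (simp flip: power_add)
    finally have "c * (q ^ (k * r) * G) < q ^ n" by simp
    then show ?thesis using mn cc sh by simp
  next
    case False
    have mn: "min (card C) (\<alpha> - 1) = card C" using False by simp
    have "{S. S \<subseteq> C \<and> card S = card C} = {C}"
      using fC card_subset_eq by blast
    then have cc: "card {S. S \<subseteq> C \<and> card S = card C} = 1" by simp
    have "1 \<le> q - 1" using q by simp
    then have "G * 1 \<le> G * (q - 1)" by (rule mult_le_mono2)
    then have "G < q ^ k" using geo by linarith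
    then have "q ^ (k * card C) * G < q ^ (k * card C) * q ^ k" using q by simp
    also have "\<dots> = q ^ (k * (card C + 1))" by (simp add: power_add algebra_simps)
    also have "\<dots> \<le> q ^ n"
    proof (rule power_increasing)
      have "k * (card C + 1) \<le> k * \<alpha>" using False by (intro mult_le_mono2) simp
      then show "k * (card C + 1) \<le> n" using n by (simp add: ac_simps)
    qed (use q in simp)
    finally show ?thesis using mn cc sh by simp
  qed
qed


theorem mainTheorem14:
  fixes q n k \<alpha> :: nat
  assumes "CARD('a::{field,finite}) = q"
    and "CARD('n::finite) = n"
    and "k > 0" and "\<alpha> \<ge> 3" and "k dvd n" and "n \<ge> \<alpha> * k"
  shows "real (B_cov TYPE('a) TYPE('n) k ((\<alpha> - 1) * k) \<alpha>)
           \<ge> real q powr ((real n - real \<alpha> * real k + 1) / (real \<alpha> - 1))"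
proof -
  note qd = assms(1) and nd = assms(2) and k = assms(3) and a = assms(4) and n = assms(6)
  have q2: "q \<ge> 2" unfolding qd[symmetric]
  proof -
    have "(0::'a) \<noteq> 1" by simp
    then have "card {0::'a, 1} = 2" by simp
    moreover have "card {0::'a, 1} \<le> CARD('a)" by (rule card_mono) auto
    ultimately show "CARD('a) \<ge> 2" by simp
  qed
  define r where "r = \<alpha> - 1"
  define e where "e = n - \<alpha> * k + 1"
  have rpos: "r > 0" using a r_def by simp
  define R where "R = real q powr (real e / real r)"
  have Rexp: "real q powr ((real n - real \<alpha> * real k + 1) / (real \<alpha> - 1)) = R"
  proof -
    have "real n - real \<alpha> * real k + 1 = real e" unfolding e_def using n
      by (simp add: of_nat_diff)
    moreover have "real \<alpha> - 1 = real r" unfolding r_def using a by (simp add: of_nat_diff)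
    ultimately show ?thesis unfolding R_def by simp
  qed
  have Rr: "R ^ r = real q ^ e"
  proof -
    have "R ^ r = real q powr (real e / real r * real r)"
      unfolding R_def using q2 by (simp add: powr_realpow[symmetric] powr_powr)
    also have "\<dots> = real q ^ e" using rpos q2 by (simp add: powr_realpow)
    finally show ?thesis .
  qed
  have R0: "R \<ge> 0" unfolding R_def by simp
  define N0 where "N0 = nat \<lceil>R\<rceil>"
  have grow: "\<forall>N. N \<le> N0 \<longrightarrow> (\<exists>C :: ('a^'n) set set. goodc k \<alpha> C \<and> card C = N)"
  proof (intro allI)
    fix N show "N \<le> N0 \<longrightarrow> (\<exists>C :: ('a^'n) set set. goodc k \<alpha> C \<and> card C = N)"
    proof (induction N)
      case 0
      have "goodc k \<alpha> ({} :: ('a^'n) set set)" unfolding goodc_def by simp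
      then show ?case by force
    next
      case (Suc N)
      show ?case
      proof
        assume SN: "Suc N \<le> N0"
        then obtain C :: "('a^'n) set set" where C: "goodc k \<alpha> C" "card C = N" using Suc.IH by auto
        have "real N < R" using SN unfolding N0_def by linarith
        then have "real N ^ r < R ^ r" by (intro power_strict_mono) (use rpos in auto)
        then have "real (N ^ r) < real (q ^ e)" using Rr by simp
        then have "card C ^ (\<alpha> - 1) < q ^ (n - \<alpha> * k + 1)"
          using C(2) unfolding r_def e_def of_nat_less_iff by simp
        moreover have "finite C" using C unfolding goodc_def by simp
        ultimately have h: "card {S. S \<subseteq> C \<and> card S = min (card C) (\<alpha> - 1)}
           * (\<Sum>i<k. q ^ (k * min (card C) (\<alpha> - 1) + i)) < q ^ n"
          by (intro arith_hyp[OF q2 k a n])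
        have "\<exists>U. U \<notin> C \<and> goodc k \<alpha> (insert U C)"
          by (rule step[OF C(1) k]) (use a h qd nd in auto)
        then obtain U where U: "U \<notin> C" "goodc k \<alpha> (insert U C)" by blast
        moreover have "card (insert U C) = Suc N" using U C \<open>finite C\<close> by simp
        ultimately show "\<exists>C :: ('a^'n) set set. goodc k \<alpha> C \<and> card C = Suc N" by blast
      qed
    qed
  qed
  then obtain C :: "('a^'n) set set" where C: "goodc k \<alpha> C" "card C = N0" by blast
  have cov: "covering_grassmannian_code k ((\<alpha> - 1) * k) \<alpha> C"
    unfolding covering_grassmannian_code_def
  proof (intro conjI allI impI)
    show "C \<subseteq> grassmannian k" using C unfolding goodc_def by simp
    fix S assume S: "S \<subseteq> C" "card S = \<alpha>"
    then have "k * \<alpha> \<le> vec.dim (\<Union>S)" using C unfolding goodc_def by auto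
    moreover have "k + (\<alpha> - 1) * k = k * \<alpha>" using a by (simp add: algebra_simps diff_mult_distrib)
    ultimately show "k + (\<alpha> - 1) * k \<le> vec.dim (vec.span (\<Union>S))" by simp
  qed
  have "N0 \<le> B_cov TYPE('a) TYPE('n) k ((\<alpha> - 1) * k) \<alpha>"
    unfolding B_cov_def
  proof (rule Max_ge)
    show "finite {card C |C :: ('a^'n) set set. covering_grassmannian_code k ((\<alpha> - 1) * k) \<alpha> C}"
      by (rule finite_subset[of _ "card ` UNIV"]) auto
    show "N0 \<in> {card C |C :: ('a^'n) set set. covering_grassmannian_code k ((\<alpha> - 1) * k) \<alpha> C}"
      using cov C by auto
  qed
  moreover have "R \<le> real N0" unfolding N0_def by linarith
  ultimately show ?thesis unfolding Rexp by linarith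
qed

end
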